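(* For MLAPD on a path of depth $D$ (the tree $\mathcal{T}$ is a path graph with $D$ nodes whose root $r$ is an endpoint), the online algorithm \textsc{Double} is $(4-2^{-D})$-competitive.
   Context: MLAPD: an instance is a rooted tree $\mathcal{T}$ with root $r$ and positive node costs $c(v)>0$, together with a set $\mathcal{R}$ of requests $\rho=(v,a,d)$ (node, arrival time, deadline $d\ge a$; deadlines distinct). A service $(S,t)$ is a subtree $S\ni r$ transmitted at time $t$, costing $c(S)=\sum_{u\in S}c(u)$; it satisfies $(v,a,d)$ if $v\in S$ and $a\le t\le d$. A feasible schedule satisfies every request; its cost is the sum of service costs. Online: requests revealed at arrival. $c$-competitive: cost at most $c$ times optimal on every instance. For request $\rho$ at $v$, $P_\rho$ is the set of nodes on the $r$–$v$ path; for a node set $S$, $c(r\to\gamma\mid S)=c(P_\gamma\setminus S)$. A request is pending at time $t$ if it has arrived by $t$ and was not satisfied by earlier transmissions. \textsc{Double}: when a pending request $\rho$ reaches its deadline $d_\rho$, set $S=P_\rho$; then repeat: if no pending request is unsatisfied by $S$, stop; otherwise let $\gamma$ be the pending request with earliest deadline not satisfied by $S$; if $c(S)+c(r\to\gamma\mid S)>2c(P_\rho)$ stop, else set $S\gets S\cup P_\gamma$. Finally transmit $(S,d_\rho)$. *)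

theory Defs
  imports Main "HOL.Real"
begin

text \<open>MLAPD on a path with D nodes 1..D; node 1 is the root (an endpoint),
  the parent of node i > 1 is i - 1.  A request is (node, arrival, deadline).\<close>

type_synonym request = "nat \<times> real \<times> real"
type_synonym service = "nat set \<times> real"

definition node :: "request \<Rightarrow> nat" where "node \<rho> = fst \<rho>"
definition arr :: "request \<Rightarrow> real" where "arr \<rho> = fst (snd \<rho>)"
definition dl :: "request \<Rightarrow> real" where "dl \<rho> = snd (snd \<rho>)"

definition rooted_subtree :: "nat \<Rightarrow> nat set \<Rightarrow> bool" where
  "rooted_subtree D S \<longleftrightarrow> S \<subseteq> {1..D} \<and> 1 \<in> S \<and> (\<forall>i\<in>S. 1 < i \<longrightarrow> i - 1 \<in> S)"

definition path_to :: "nat \<Rightarrow> nat set" where "path_to v = {1..v}"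

definition satisfies :: "service \<Rightarrow> request \<Rightarrow> bool" where
  "satisfies s \<rho> \<longleftrightarrow> node \<rho> \<in> fst s \<and> arr \<rho> \<le> snd s \<and> snd s \<le> dl \<rho>"

definition valid_instance :: "nat \<Rightarrow> (nat \<Rightarrow> real) \<Rightarrow> request set \<Rightarrow> bool" where
  "valid_instance D c R \<longleftrightarrow> 1 \<le> D \<and> (\<forall>i\<in>{1..D}. 0 < c i) \<and> finite R \<and>
     (\<forall>\<rho>\<in>R. node \<rho> \<in> {1..D} \<and> arr \<rho> \<le> dl \<rho>) \<and> inj_on dl R"

definition feasible :: "nat \<Rightarrow> request set \<Rightarrow> service list \<Rightarrow> bool" where
  "feasible D R sched \<longleftrightarrow> (\<forall>s\<in>set sched. rooted_subtree D (fst s)) \<and>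
     (\<forall>\<rho>\<in>R. \<exists>s\<in>set sched. satisfies s \<rho>)"

definition sched_cost :: "(nat \<Rightarrow> real) \<Rightarrow> service list \<Rightarrow> real" where
  "sched_cost c sched = (\<Sum>s\<leftarrow>sched. sum c (fst s))"

definition pending :: "request set \<Rightarrow> service list \<Rightarrow> real \<Rightarrow> request \<Rightarrow> bool" where
  "pending R tr t \<rho> \<longleftrightarrow> \<rho> \<in> R \<and> arr \<rho> \<le> t \<and> \<not> (\<exists>s\<in>set tr. snd s < t \<and> satisfies s \<rho>)"

text \<open>The growing loop of Double triggered by \<rho> (with a fuel bound, which is
  never exhausted since every iteration newly satisfies a request).\<close>
fun double_grow :: "(nat \<Rightarrow> real) \<Rightarrow> request set \<Rightarrow> service list \<Rightarrow> request \<Rightarrow> nat \<Rightarrow> nat set \<Rightarrow> nat set" where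
  "double_grow c R tr \<rho> 0 S = S"
| "double_grow c R tr \<rho> (Suc n) S =
     (let t = dl \<rho>; U = {\<gamma>. pending R tr t \<gamma> \<and> \<not> satisfies (S, t) \<gamma>} in
      if U = {} then S else
      (let \<gamma> = (THE \<gamma>. \<gamma> \<in> U \<and> (\<forall>\<delta>\<in>U. dl \<gamma> \<le> dl \<delta>)) in
       if sum c S + sum c (path_to (node \<gamma>) - S) > 2 * sum c (path_to (node \<rho>)) then S
       else double_grow c R tr \<rho> n (S \<union> path_to (node \<gamma>))))"

definition double_step :: "(nat \<Rightarrow> real) \<Rightarrow> request set \<Rightarrow> service list \<Rightarrow> request \<Rightarrow> service list" where
  "double_step c R tr \<rho> =
     (if pending R tr (dl \<rho>) \<rho>
      then tr @ [(double_grow c R tr \<rho> (card R + 1) (path_to (node \<rho>)), dl \<rho>)]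
      else tr)"

definition double :: "(nat \<Rightarrow> real) \<Rightarrow> request set \<Rightarrow> service list" where
  "double c R = foldl (double_step c R) []
     (map (\<lambda>d. THE \<rho>. \<rho> \<in> R \<and> dl \<rho> = d) (sorted_list_of_set (dl ` R)))"

end

theory Submission
  imports Defs
begin

lemma pend_app: "t \<le> snd s \<Longrightarrow> pending R (tr @ [s]) t \<gamma> = pending R tr t \<gamma>"
  by (auto simp: pending_def)

lemma grow_app:
  assumes "dl \<rho> \<le> snd s"
  shows "double_grow c R (tr @ [s]) \<rho> n S = double_grow c R tr \<rho> n S"
proof -
  have e: "pending R (tr@[s]) (dl \<rho>) = pending R tr (dl \<rho>)"
    using assms by (auto simp: pending_def fun_eq_iff)
  show ?thesis by (induction n arbitrary: S) (simp_all only: double_grow.simps Let_def e)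
qed

lemma fold_inv:
  assumes "sorted_wrt (\<lambda>x y. dl x < dl y) xs"
  shows "distinct (foldl (double_step c R) [] xs) \<and>
    snd ` set (foldl (double_step c R) [] xs) \<subseteq> dl ` set xs \<and>
    set (foldl (double_step c R) [] xs) =
      (\<lambda>\<rho>. (double_grow c R (foldl (double_step c R) [] xs) \<rho> (card R + 1) (path_to (node \<rho>)), dl \<rho>))
        ` {\<rho> \<in> set xs. pending R (foldl (double_step c R) [] xs) (dl \<rho>) \<rho>}"
  using assms
proof (induction xs rule: rev_induct)
  case Nil show ?case by simp
next
  case (snoc x xs)
  define tr where "tr = foldl (double_step c R) [] xs"
  define N where "N = card R + 1"
  have lt: "\<forall>y\<in>set xs. dl y < dl x" using snoc.prems by (simp add: sorted_wrt_append)
  have sx: "sorted_wrt (\<lambda>x y. dl x < dl y) xs" using snoc.prems by (simp add: sorted_wrt_append)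
  have IH: "distinct tr \<and> snd ` set tr \<subseteq> dl ` set xs \<and>
    set tr = (\<lambda>\<rho>. (double_grow c R tr \<rho> N (path_to (node \<rho>)), dl \<rho>)) ` {\<rho> \<in> set xs. pending R tr (dl \<rho>) \<rho>}"
    unfolding tr_def N_def by (rule snoc.IH[OF sx])
  show ?case
  proof (cases "pending R tr (dl x) x")
    case True
    define s where "s = (double_grow c R tr x N (path_to (node x)), dl x)"
    have "foldl (double_step c R) [] (xs@[x]) = double_step c R tr x" by (simp add: tr_def)
    also have "\<dots> = tr @ [s]" by (simp add: s_def double_step_def True N_def)
    finally have eq: "foldl (double_step c R) [] (xs@[x]) = tr @ [s]" .
    have le: "\<And>\<rho>. \<rho> \<in> set (xs@[x]) \<Longrightarrow> dl \<rho> \<le> snd s" using lt by (auto simp: s_def less_imp_le)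
    have A: "{\<rho> \<in> set (xs@[x]). pending R (tr@[s]) (dl \<rho>) \<rho>} = insert x {\<rho> \<in> set xs. pending R tr (dl \<rho>) \<rho>}"
      using le True by (auto simp: pend_app)
    have B: "(\<lambda>\<rho>. (double_grow c R (tr@[s]) \<rho> N (path_to (node \<rho>)), dl \<rho>)) ` insert x {\<rho> \<in> set xs. pending R tr (dl \<rho>) \<rho>}
       = (\<lambda>\<rho>. (double_grow c R tr \<rho> N (path_to (node \<rho>)), dl \<rho>)) ` insert x {\<rho> \<in> set xs. pending R tr (dl \<rho>) \<rho>}"
      by (rule image_cong) (auto simp: grow_app le)
    have ns: "snd s \<notin> snd ` set tr" using IH lt by (auto simp: s_def)
    have C: "set (tr@[s]) = (\<lambda>\<rho>. (double_grow c R tr \<rho> N (path_to (node \<rho>)), dl \<rho>)) ` insert x {\<rho> \<in> set xs. pending R tr (dl \<rho>) \<rho>}"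
      using IH by (simp add: s_def)
    have D: "distinct (tr@[s])" using IH ns by auto
    have E: "snd ` set (tr@[s]) \<subseteq> dl ` set (xs@[x])" using IH by (auto simp: s_def)
    show ?thesis unfolding eq N_def[symmetric] A B using C D E by blast
  next
    case False
    have "foldl (double_step c R) [] (xs@[x]) = double_step c R tr x" by (simp add: tr_def)
    also have "\<dots> = tr" by (simp add: double_step_def False)
    finally have eq: "foldl (double_step c R) [] (xs@[x]) = tr" .
    have A: "{\<rho> \<in> set (xs@[x]). pending R tr (dl \<rho>) \<rho>} = {\<rho> \<in> set xs. pending R tr (dl \<rho>) \<rho>}"
      using False by auto
    show ?thesis unfolding eq A N_def[symmetric] using IH by auto
  qed
qed


lemma geo:
  fixes f :: "'a \<Rightarrow> real"
  assumes "finite A" "\<forall>x\<in>A. 0 \<le> f x \<and> f x \<le> M"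
    "\<forall>x\<in>A. \<forall>y\<in>A. x \<noteq> y \<longrightarrow> 2 * f x < f y \<or> 2 * f y < f x"
  shows "sum f A \<le> (2 - 2 / 2 ^ card A) * M"
  using assms
proof (induction "card A" arbitrary: A M)
  case 0
  then show ?case by simp
next
  case (Suc n)
  then have ne: "A \<noteq> {}" by auto
  obtain x where x: "x \<in> A" "\<forall>y\<in>A. f y \<le> f x"
  proof -
    have "Max (f ` A) \<in> f ` A" using Suc.prems ne by simp
    then obtain x where "x \<in> A" "f x = Max (f ` A)" by auto
    moreover have "\<forall>y\<in>A. f y \<le> Max (f ` A)" using Suc.prems by simp
    ultimately show ?thesis using that by metis
  qed
  have lt: "\<forall>y\<in>A - {x}. f y \<le> f x / 2"
  proof
    fix y assume y: "y \<in> A - {x}"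
    then have "2 * f x < f y \<or> 2 * f y < f x" using Suc.prems(3) x by auto
    moreover have "f y \<le> f x" "0 \<le> f x" using x y Suc.prems(2) by auto
    ultimately show "f y \<le> f x / 2" by linarith
  qed
  have cA: "card (A - {x}) = n" using Suc.hyps(2) x by simp
  have IH: "sum f (A - {x}) \<le> (2 - 2 / 2 ^ n) * (f x / 2)"
    using Suc.hyps(1)[of "A - {x}" "f x / 2"] Suc.prems lt cA by auto
  have "sum f A = f x + sum f (A - {x})" using Suc.prems(1) x by (simp add: sum.remove)
  also have "\<dots> \<le> f x + (2 - 2 / 2 ^ n) * (f x / 2)" using IH by simp
  also have "\<dots> = (2 - 2 / 2 ^ Suc n) * f x" by (simp add: field_simps)
  also have "\<dots> \<le> (2 - 2 / 2 ^ Suc n) * M"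
  proof (rule mult_left_mono)
    show "f x \<le> M" using x Suc.prems(2) by auto
    have "(2::real) / 2 ^ Suc n \<le> 1" by (simp add: field_simps)
    then show "0 \<le> 2 - (2::real) / 2 ^ Suc n" by linarith
  qed
  finally show ?case using Suc.hyps(2) by simp
qed

lemma rooted_path:
  assumes "rooted_subtree D X" "i \<in> X"
  shows "path_to i \<subseteq> X"
proof -
  have "\<forall>i. i \<in> X \<longrightarrow> (\<forall>j. 1 \<le> j \<and> j \<le> i \<longrightarrow> j \<in> X)"
  proof
    fix i show "i \<in> X \<longrightarrow> (\<forall>j. 1 \<le> j \<and> j \<le> i \<longrightarrow> j \<in> X)"
    proof (induction i)
      case 0 then show ?case by simp
    next
      case (Suc i)
      show ?case
      proof (intro impI allI)
        fix j assume a: "Suc i \<in> X" "1 \<le> j \<and> j \<le> Suc i"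
        show "j \<in> X"
        proof (cases "j = Suc i")
          case True then show ?thesis using a by simp
        next
          case False
          then have "j \<le> i" "1 \<le> i" using a by auto
          then have "i \<in> X" using a assms(1) unfolding rooted_subtree_def by force
          then show ?thesis using Suc.IH a False by auto
        qed
      qed
    qed
  qed
  then show ?thesis using assms(2) by (auto simp: path_to_def)
qed

lemma rooted_interval: "1 \<le> m \<Longrightarrow> m \<le> D \<Longrightarrow> rooted_subtree D {1..m}"
  by (auto simp: rooted_subtree_def)

context
  fixes D :: nat and c :: "nat \<Rightarrow> real" and R :: "request set"
  assumes vi: "valid_instance D c R"
begin

lemma finR: "finite R" using vi by (simp add: valid_instance_def)
lemma cpos: "i \<in> {1..D} \<Longrightarrow> 0 < c i" using vi by (simp add: valid_instance_def)
lemma nodeR: "\<rho> \<in> R \<Longrightarrow> node \<rho> \<in> {1..D}" using vi by (simp add: valid_instance_def)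
lemma arrdl: "\<rho> \<in> R \<Longrightarrow> arr \<rho> \<le> dl \<rho>" using vi by (simp add: valid_instance_def)
lemma injdl: "inj_on dl R" using vi by (simp add: valid_instance_def)

lemma sum_nonneg_sub: "X \<subseteq> {1..D} \<Longrightarrow> 0 \<le> sum c X"
  by (rule sum_nonneg) (use cpos in force)

lemma sum_mono_sub: assumes a: "X \<subseteq> Y" "Y \<subseteq> {1..D}" shows "sum c X \<le> sum c Y"
proof (rule sum_mono2)
  show "finite Y" using a finite_subset by blast
  show "X \<subseteq> Y" using a by simp
  show "\<And>b. b \<in> Y - X \<Longrightarrow> 0 \<le> c b" using a cpos by (meson DiffD1 less_imp_le subsetD)
qed

lemma the_min:
  assumes "U \<subseteq> R" "U \<noteq> {}"
  shows "(THE \<gamma>. \<gamma> \<in> U \<and> (\<forall>\<delta>\<in>U. dl \<gamma> \<le> dl \<delta>)) \<in> U \<and>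
         (\<forall>\<delta>\<in>U. dl (THE \<gamma>. \<gamma> \<in> U \<and> (\<forall>\<delta>\<in>U. dl \<gamma> \<le> dl \<delta>)) \<le> dl \<delta>)"
proof -
  have fU: "finite U" using assms finR finite_subset by blast
  have "Min (dl ` U) \<in> dl ` U" using fU assms by simp
  then obtain g where g: "g \<in> U" "dl g = Min (dl ` U)" by auto
  have gm: "\<forall>\<delta>\<in>U. dl g \<le> dl \<delta>" using g fU by simp
  have "\<exists>!\<gamma>. \<gamma> \<in> U \<and> (\<forall>\<delta>\<in>U. dl \<gamma> \<le> dl \<delta>)"
  proof (rule ex1I[of _ g])
    show "g \<in> U \<and> (\<forall>\<delta>\<in>U. dl g \<le> dl \<delta>)" using g gm by auto
    fix y assume y: "y \<in> U \<and> (\<forall>\<delta>\<in>U. dl y \<le> dl \<delta>)"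
    then have "dl y = dl g" using g gm by (meson order_antisym)
    then show "y = g" using injdl y g assms(1) by (meson inj_onD subsetD)
  qed
  then show ?thesis by (rule theI')
qed

lemma pend_R: "pending R tr t \<gamma> \<Longrightarrow> \<gamma> \<in> R" by (simp add: pending_def)

lemma grow_basic:
  assumes "S = {1..m}" "1 \<le> m" "m \<le> D" "sum c S \<le> 2 * sum c (path_to (node \<rho>))"
  shows "\<exists>m'. double_grow c R tr \<rho> n S = {1..m'} \<and> 1 \<le> m' \<and> m' \<le> D \<and>
     S \<subseteq> double_grow c R tr \<rho> n S \<and>
     sum c (double_grow c R tr \<rho> n S) \<le> 2 * sum c (path_to (node \<rho>))"
  using assms
proof (induction n arbitrary: S m)
  case 0 then show ?case by auto
next
  case (Suc k)
  define t where "t = dl \<rho>"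
  define U where "U = {\<gamma>. pending R tr t \<gamma> \<and> \<not> satisfies (S, t) \<gamma>}"
  define g where "g = (THE \<gamma>. \<gamma> \<in> U \<and> (\<forall>\<delta>\<in>U. dl \<gamma> \<le> dl \<delta>))"
  have eq: "double_grow c R tr \<rho> (Suc k) S = (if U = {} then S else
       if sum c S + sum c (path_to (node g) - S) > 2 * sum c (path_to (node \<rho>)) then S
       else double_grow c R tr \<rho> k (S \<union> path_to (node g)))"
    by (simp only: double_grow.simps Let_def t_def[symmetric] U_def[symmetric] g_def[symmetric])
  show ?case
  proof (cases "U = {} \<or> sum c S + sum c (path_to (node g) - S) > 2 * sum c (path_to (node \<rho>))")
    case True then show ?thesis unfolding eq using Suc.prems by auto
  next
    case False
    have UR: "U \<subseteq> R" by (auto simp: U_def pending_def)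
    have gU: "g \<in> U" using the_min[OF UR] False by (simp add: g_def)
    have gn: "node g \<in> {1..D}" using gU UR by (blast intro: nodeR)
    have S2: "S \<union> path_to (node g) = {1..max m (node g)}" using Suc.prems(1) by (auto simp: path_to_def)
    have fS: "finite S" using Suc.prems by simp
    have "sum c (S \<union> path_to (node g)) = sum c (S \<union> (path_to (node g) - S))" by (simp add: Un_Diff_cancel)
    also have "\<dots> = sum c S + sum c (path_to (node g) - S)"
      by (rule sum.union_disjoint) (auto simp: fS path_to_def)
    finally have sl: "sum c (S \<union> path_to (node g)) \<le> 2 * sum c (path_to (node \<rho>))" using False by linarith
    have "\<exists>m'. double_grow c R tr \<rho> k (S \<union> path_to (node g)) = {1..m'} \<and> 1 \<le> m' \<and> m' \<le> D \<and>
     S \<union> path_to (node g) \<subseteq> double_grow c R tr \<rho> k (S \<union> path_to (node g)) \<and>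
     sum c (double_grow c R tr \<rho> k (S \<union> path_to (node g))) \<le> 2 * sum c (path_to (node \<rho>))"
      by (rule Suc.IH[OF S2]) (use Suc.prems gn sl S2 in auto)
    then obtain m' where m': "double_grow c R tr \<rho> k (S \<union> path_to (node g)) = {1..m'}" "1 \<le> m'" "m' \<le> D"
      "S \<union> path_to (node g) \<subseteq> double_grow c R tr \<rho> k (S \<union> path_to (node g))"
      "sum c (double_grow c R tr \<rho> k (S \<union> path_to (node g))) \<le> 2 * sum c (path_to (node \<rho>))"
      by blast
    show ?thesis unfolding eq using False m' by auto
  qed
qed


lemma grow_loop:
  assumes H: "\<forall>\<gamma>. pending R tr (dl \<rho>) \<gamma> \<longrightarrow> dl \<rho> \<le> dl \<gamma>"
  and "S = {1..m}" "1 \<le> m" "m \<le> D"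
  and "card {\<gamma>. pending R tr (dl \<rho>) \<gamma> \<and> \<not> satisfies (S, dl \<rho>) \<gamma>} < n"
  shows "\<forall>\<gamma>. pending R tr (dl \<rho>) \<gamma> \<and> \<not> satisfies (double_grow c R tr \<rho> n S, dl \<rho>) \<gamma> \<longrightarrow>
     (\<exists>\<gamma>'. pending R tr (dl \<rho>) \<gamma>' \<and> \<not> satisfies (double_grow c R tr \<rho> n S, dl \<rho>) \<gamma>' \<and> dl \<gamma>' \<le> dl \<gamma> \<and>
        2 * sum c (path_to (node \<rho>)) < sum c (double_grow c R tr \<rho> n S) + sum c (path_to (node \<gamma>') - double_grow c R tr \<rho> n S))"
  using assms(2-)
proof (induction n arbitrary: S m)
  case 0 then show ?case by simp
next
  case (Suc k)
  define t where "t = dl \<rho>"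
  define U where "U = {\<gamma>. pending R tr t \<gamma> \<and> \<not> satisfies (S, t) \<gamma>}"
  define g where "g = (THE \<gamma>. \<gamma> \<in> U \<and> (\<forall>\<delta>\<in>U. dl \<gamma> \<le> dl \<delta>))"
  have eq: "double_grow c R tr \<rho> (Suc k) S = (if U = {} then S else
       if sum c S + sum c (path_to (node g) - S) > 2 * sum c (path_to (node \<rho>)) then S
       else double_grow c R tr \<rho> k (S \<union> path_to (node g)))"
    by (simp only: double_grow.simps Let_def t_def[symmetric] U_def[symmetric] g_def[symmetric])
  have UR: "U \<subseteq> R" by (auto simp: U_def pending_def)
  have fU: "finite U" using UR finR finite_subset by blast
  show ?case
  proof (cases "U = {}")
    case True
    have "\<forall>\<gamma>. \<not> (pending R tr (dl \<rho>) \<gamma> \<and> \<not> satisfies (S, dl \<rho>) \<gamma>)" using True by (auto simp: U_def t_def)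
    moreover have "double_grow c R tr \<rho> (Suc k) S = S" unfolding eq using True by simp
    ultimately show ?thesis by metis
  next
    case ne: False
    have gU: "g \<in> U" and gmin: "\<forall>\<delta>\<in>U. dl g \<le> dl \<delta>" using the_min[OF UR ne] by (simp_all add: g_def)
    show ?thesis
    proof (cases "sum c S + sum c (path_to (node g) - S) > 2 * sum c (path_to (node \<rho>))")
      case True
      have gr: "double_grow c R tr \<rho> (Suc k) S = S" unfolding eq using ne True by simp
      have gU': "pending R tr (dl \<rho>) g \<and> \<not> satisfies (S, dl \<rho>) g" using gU by (simp add: U_def t_def)
      show ?thesis unfolding gr
      proof (intro allI impI)
        fix \<gamma> assume "pending R tr (dl \<rho>) \<gamma> \<and> \<not> satisfies (S, dl \<rho>) \<gamma>"
        then have "\<gamma> \<in> U" by (simp add: U_def t_def)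
        then have "dl g \<le> dl \<gamma>" using gmin by blast
        then show "\<exists>\<gamma>'. pending R tr (dl \<rho>) \<gamma>' \<and> \<not> satisfies (S, dl \<rho>) \<gamma>' \<and> dl \<gamma>' \<le> dl \<gamma> \<and>
        2 * sum c (path_to (node \<rho>)) < sum c S + sum c (path_to (node \<gamma>') - S)"
          using gU' True by blast
      qed
    next
      case False
      have gn: "node g \<in> {1..D}" using gU UR by (blast intro: nodeR)
      have S2: "S \<union> path_to (node g) = {1..max m (node g)}" using Suc.prems(1) by (auto simp: path_to_def)
      define U' where "U' = {\<gamma>. pending R tr (dl \<rho>) \<gamma> \<and> \<not> satisfies (S \<union> path_to (node g), dl \<rho>) \<gamma>}"
      have sub: "U' \<subseteq> U - {g}"
      proof
        fix x assume x: "x \<in> U'"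
        have pg: "pending R tr (dl \<rho>) g" using gU by (simp add: U_def t_def)
        then have "dl \<rho> \<le> dl g" using H by blast
        then have gs: "satisfies (S \<union> path_to (node g), dl \<rho>) g"
          using pg gn by (auto simp: U_def t_def satisfies_def pending_def path_to_def)
        have "x \<in> U" using x by (auto simp: U'_def U_def t_def satisfies_def)
        moreover have "x \<noteq> g" using x gs by (auto simp: U'_def)
        ultimately show "x \<in> U - {g}" by simp
      qed
      have "card U' \<le> card (U - {g})" using sub fU by (simp add: card_mono)
      also have "\<dots> < k"
      proof -
        have cU: "card U < Suc k" using Suc.prems(4) by (simp add: U_def t_def)
        have "card (U - {g}) = card U - 1" using gU fU by simp
        moreover have "0 < card U" using gU fU card_gt_0_iff by blast
        ultimately show ?thesis using cU by linarith
      qed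
      finally have ck: "card U' < k" .
      have "\<forall>\<gamma>. pending R tr (dl \<rho>) \<gamma> \<and> \<not> satisfies (double_grow c R tr \<rho> k (S \<union> path_to (node g)), dl \<rho>) \<gamma> \<longrightarrow>
     (\<exists>\<gamma>'. pending R tr (dl \<rho>) \<gamma>' \<and> \<not> satisfies (double_grow c R tr \<rho> k (S \<union> path_to (node g)), dl \<rho>) \<gamma>' \<and> dl \<gamma>' \<le> dl \<gamma> \<and>
        2 * sum c (path_to (node \<rho>)) < sum c (double_grow c R tr \<rho> k (S \<union> path_to (node g))) + sum c (path_to (node \<gamma>') - double_grow c R tr \<rho> k (S \<union> path_to (node g))))"
        by (rule Suc.IH[OF S2]) (use Suc.prems gn ck in \<open>auto simp: U'_def\<close>)
      then show ?thesis unfolding eq using ne False by simp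
    qed
  qed
qed

definition Gr where "Gr \<rho> = double_grow c R (double c R) \<rho> (card R + 1) (path_to (node \<rho>))"
definition Tr where "Tr = {\<rho> \<in> R. pending R (double c R) (dl \<rho>) \<rho>}"

lemma F_struct: "distinct (double c R) \<and> set (double c R) = (\<lambda>\<rho>. (Gr \<rho>, dl \<rho>)) ` Tr"
proof -
  define L where "L = sorted_list_of_set (dl ` R)"
  define rs where "rs = map (\<lambda>d. THE \<rho>. \<rho> \<in> R \<and> dl \<rho> = d) L"
  have fL: "finite (dl ` R)" using finR by simp
  have setL: "set L = dl ` R" using fL by (simp add: L_def)
  have sL: "sorted_wrt (<) L" unfolding strict_sorted_iff L_def by simp
  have the1: "(THE \<rho>. \<rho> \<in> R \<and> dl \<rho> = d) \<in> R \<and> dl (THE \<rho>. \<rho> \<in> R \<and> dl \<rho> = d) = d" if dR: "d \<in> dl ` R" for d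
  proof -
    obtain \<rho> where r: "\<rho> \<in> R" "dl \<rho> = d" using dR by blast
    have "\<exists>!\<rho>. \<rho> \<in> R \<and> dl \<rho> = d"
      using r injdl by (metis inj_onD)
    then show ?thesis by (rule theI')
  qed
  have mapdl: "map dl rs = L" unfolding rs_def map_map
    by (rule map_idI) (use the1 setL in auto)
  have srt: "sorted_wrt (\<lambda>x y. dl x < dl y) rs" using sL mapdl by (metis sorted_wrt_map)
  have setrs: "set rs = R"
  proof
    show "set rs \<subseteq> R" using the1 setL by (auto simp: rs_def)
    show "R \<subseteq> set rs"
    proof
      fix \<rho> assume r: "\<rho> \<in> R"
      have "(THE \<rho>'. \<rho>' \<in> R \<and> dl \<rho>' = dl \<rho>) = \<rho>"
        using r injdl by (intro the1_equality) (auto dest: inj_onD)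
      moreover have "dl \<rho> \<in> set L" using setL r by simp
      ultimately show "\<rho> \<in> set rs" unfolding rs_def set_map
        by (intro image_eqI[where x="dl \<rho>"]) simp_all
    qed
  qed
  have dd: "double c R = foldl (double_step c R) [] rs" by (simp add: double_def rs_def L_def)
  show ?thesis using fold_inv[OF srt, of c R] unfolding dd[symmetric] setrs Gr_def Tr_def by simp
qed

lemma Wnn: "\<rho> \<in> R \<Longrightarrow> 0 \<le> sum c (path_to (node \<rho>))"
  using nodeR[of \<rho>] by (intro sum_nonneg_sub) (auto simp: path_to_def)

lemma Gr_basic:
  assumes "\<rho> \<in> R"
  shows "\<exists>m'. Gr \<rho> = {1..m'} \<and> 1 \<le> m' \<and> m' \<le> D \<and> path_to (node \<rho>) \<subseteq> Gr \<rho> \<and>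
     sum c (Gr \<rho>) \<le> 2 * sum c (path_to (node \<rho>))"
  unfolding Gr_def
  by (rule grow_basic[of _ "node \<rho>"]) (use nodeR[OF assms] Wnn[OF assms] in \<open>auto simp: path_to_def\<close>)

lemma Gr_sat: "\<rho> \<in> R \<Longrightarrow> satisfies (Gr \<rho>, dl \<rho>) \<rho>"
  using Gr_basic[of \<rho>] nodeR[of \<rho>] arrdl[of \<rho>] by (auto simp: satisfies_def path_to_def)

lemma served: "\<rho> \<in> R \<Longrightarrow> \<exists>s\<in>set (double c R). snd s \<le> dl \<rho> \<and> satisfies s \<rho>"
proof -
  assume r: "\<rho> \<in> R"
  show ?thesis
  proof (cases "\<rho> \<in> Tr")
    case True
    then have "(Gr \<rho>, dl \<rho>) \<in> set (double c R)" using F_struct by auto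
    then show ?thesis using Gr_sat[OF r] by (intro bexI[of _ "(Gr \<rho>, dl \<rho>)"]) auto
  next
    case False
    then have "\<not> pending R (double c R) (dl \<rho>) \<rho>" using r by (simp add: Tr_def)
    then have "\<exists>s\<in>set (double c R). snd s < dl \<rho> \<and> satisfies s \<rho>" using r arrdl[OF r] by (simp add: pending_def)
    then show ?thesis by (meson less_imp_le)
  qed
qed

lemma pend_ge: "pending R (double c R) t \<gamma> \<Longrightarrow> t \<le> dl \<gamma>"
proof (rule ccontr)
  assume p: "pending R (double c R) t \<gamma>" and "\<not> t \<le> dl \<gamma>"
  then have lt: "dl \<gamma> < t" by simp
  have "\<gamma> \<in> R" using p by (simp add: pending_def)
  then obtain s where "s \<in> set (double c R)" "snd s \<le> dl \<gamma>" "satisfies s \<gamma>" using served by blast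
  then show False using p lt by (auto simp: pending_def)
qed

lemma feasF: "feasible D R (double c R)"
  unfolding feasible_def
proof
  show "\<forall>s\<in>set (double c R). rooted_subtree D (fst s)"
  proof
    fix s assume "s \<in> set (double c R)"
    then obtain \<rho> where "\<rho> \<in> Tr" "s = (Gr \<rho>, dl \<rho>)" using F_struct by auto
    moreover then have "\<rho> \<in> R" by (simp add: Tr_def)
    ultimately show "rooted_subtree D (fst s)" using Gr_basic[of \<rho>] rooted_interval by auto
  qed
  show "\<forall>\<rho>\<in>R. \<exists>s\<in>set (double c R). satisfies s \<rho>" using served by blast
qed

lemma Gr_loop:
  assumes "\<rho> \<in> R"
  shows "\<forall>\<gamma>. pending R (double c R) (dl \<rho>) \<gamma> \<and> \<not> satisfies (Gr \<rho>, dl \<rho>) \<gamma> \<longrightarrow>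
     (\<exists>\<gamma>'. pending R (double c R) (dl \<rho>) \<gamma>' \<and> \<not> satisfies (Gr \<rho>, dl \<rho>) \<gamma>' \<and> dl \<gamma>' \<le> dl \<gamma> \<and>
        2 * sum c (path_to (node \<rho>)) < sum c (Gr \<rho>) + sum c (path_to (node \<gamma>') - Gr \<rho>))"
  unfolding Gr_def
proof (rule grow_loop[of _ _ _ "node \<rho>"])
  show "\<forall>\<gamma>. pending R (double c R) (dl \<rho>) \<gamma> \<longrightarrow> dl \<rho> \<le> dl \<gamma>" using pend_ge by blast
  show "path_to (node \<rho>) = {1..node \<rho>}" by (simp add: path_to_def)
  show "1 \<le> node \<rho>" "node \<rho> \<le> D" using nodeR[OF assms] by auto
  have "{\<gamma>. pending R (double c R) (dl \<rho>) \<gamma> \<and> \<not> satisfies (path_to (node \<rho>), dl \<rho>) \<gamma>} \<subseteq> R"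
    by (auto simp: pending_def)
  then show "card {\<gamma>. pending R (double c R) (dl \<rho>) \<gamma> \<and> \<not> satisfies (path_to (node \<rho>), dl \<rho>) \<gamma>} < card R + 1"
    using finR by (simp add: card_mono le_imp_less_Suc)
qed


lemma Wmono: "a \<le> b \<Longrightarrow> b \<le> D \<Longrightarrow> sum c (path_to a) \<le> sum c (path_to b)"
  by (rule sum_mono_sub) (auto simp: path_to_def)

lemma TrR: "\<rho> \<in> Tr \<Longrightarrow> \<rho> \<in> R" by (simp add: Tr_def)

lemma doubling:
  assumes r1: "\<rho>1 \<in> Tr" and r2: "\<rho>2 \<in> Tr" and lt: "dl \<rho>1 < dl \<rho>2" and ar: "arr \<rho>2 \<le> dl \<rho>1"
  shows "2 * sum c (path_to (node \<rho>1)) < sum c (path_to (node \<rho>2))"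
proof (rule ccontr)
  assume nc: "\<not> 2 * sum c (path_to (node \<rho>1)) < sum c (path_to (node \<rho>2))"
  have R1: "\<rho>1 \<in> R" and R2: "\<rho>2 \<in> R" using r1 r2 by (simp_all add: Tr_def)
  have p2: "pending R (double c R) (dl \<rho>2) \<rho>2" using r2 by (simp add: Tr_def)
  have p12: "pending R (double c R) (dl \<rho>1) \<rho>2" using p2 lt ar unfolding pending_def by force
  have ns: "\<not> satisfies (Gr \<rho>1, dl \<rho>1) \<rho>2"
  proof
    assume "satisfies (Gr \<rho>1, dl \<rho>1) \<rho>2"
    moreover have "(Gr \<rho>1, dl \<rho>1) \<in> set (double c R)" using F_struct r1 by auto
    ultimately show False using p2 lt unfolding pending_def by force
  qed
  obtain \<gamma> where g: "pending R (double c R) (dl \<rho>1) \<gamma>" "\<not> satisfies (Gr \<rho>1, dl \<rho>1) \<gamma>"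
    "dl \<gamma> \<le> dl \<rho>2" "2 * sum c (path_to (node \<rho>1)) < sum c (Gr \<rho>1) + sum c (path_to (node \<gamma>) - Gr \<rho>1)"
    using Gr_loop[OF R1] p12 ns by blast
  obtain m where m: "Gr \<rho>1 = {1..m}" "1 \<le> m" "m \<le> D" "sum c (Gr \<rho>1) \<le> 2 * sum c (path_to (node \<rho>1))"
    using Gr_basic[OF R1] by blast
  have gR: "\<gamma> \<in> R" using g(1) by (simp add: pending_def)
  have gn: "1 \<le> node \<gamma>" "node \<gamma> \<le> D" using nodeR[OF gR] by auto
  have mg: "m < node \<gamma>"
  proof (rule ccontr)
    assume "\<not> m < node \<gamma>"
    then have "path_to (node \<gamma>) - Gr \<rho>1 = {}" using m by (auto simp: path_to_def)
    then have "sum c (path_to (node \<gamma>) - Gr \<rho>1) = 0" by (simp only: sum.empty)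
    then show False using g(4) m(4) by linarith
  qed
  have sub: "Gr \<rho>1 \<subseteq> path_to (node \<gamma>)" using m mg by (auto simp: path_to_def)
  have "sum c (path_to (node \<gamma>)) = sum c (path_to (node \<gamma>) - Gr \<rho>1) + sum c (Gr \<rho>1)"
    by (rule sum.subset_diff[OF sub]) (simp add: path_to_def)
  then have Wg: "2 * sum c (path_to (node \<rho>1)) < sum c (path_to (node \<gamma>))" using g(4) by linarith
  have n2: "node \<rho>2 < node \<gamma>"
  proof (rule ccontr)
    assume "\<not> node \<rho>2 < node \<gamma>"
    then have "sum c (path_to (node \<gamma>)) \<le> sum c (path_to (node \<rho>2))"
      using nodeR[OF R2] by (intro Wmono) auto
    then show False using Wg nc by linarith
  qed
  have "\<gamma> \<noteq> \<rho>2" using n2 by auto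
  then have dlg: "dl \<gamma> < dl \<rho>2" using g(3) injdl gR R2 by (metis inj_onD order_le_imp_less_or_eq)
  obtain s where s: "s \<in> set (double c R)" "snd s \<le> dl \<gamma>" "satisfies s \<gamma>" using served[OF gR] by blast
  have s1: "dl \<rho>1 \<le> snd s"
  proof (rule ccontr)
    assume "\<not> dl \<rho>1 \<le> snd s"
    then show False using g(1) s unfolding pending_def by force
  qed
  have s2: "snd s \<noteq> dl \<rho>1"
  proof
    assume e: "snd s = dl \<rho>1"
    obtain \<rho>' where r': "\<rho>' \<in> Tr" "s = (Gr \<rho>', dl \<rho>')" using s(1) F_struct by auto
    then have "\<rho>' = \<rho>1" using e injdl R1 TrR[OF r'(1)] by (auto dest: inj_onD)
    then show False using r' s(3) g(2) by simp
  qed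
  have rt: "rooted_subtree D (fst s)" using feasF s(1) by (simp add: feasible_def)
  have "node \<gamma> \<in> fst s" using s(3) by (simp add: satisfies_def)
  then have "path_to (node \<gamma>) \<subseteq> fst s" by (rule rooted_path[OF rt])
  then have "node \<rho>2 \<in> fst s" using n2 nodeR[OF R2] by (auto simp: path_to_def)
  then have "satisfies s \<rho>2" using s1 s2 s(2) dlg ar by (auto simp: satisfies_def)
  moreover have "snd s < dl \<rho>2" using s(2) dlg by simp
  ultimately show False using p2 s(1) unfolding pending_def by blast
qed

lemma costF: "sched_cost c (double c R) \<le> (\<Sum>\<rho>\<in>Tr. 2 * sum c (path_to (node \<rho>)))"
proof -
  have inj: "inj_on (\<lambda>\<rho>. (Gr \<rho>, dl \<rho>)) Tr"
    using injdl TrR by (auto simp: inj_on_def)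
  have "sched_cost c (double c R) = (\<Sum>s\<in>set (double c R). sum c (fst s))"
    unfolding sched_cost_def using F_struct by (simp add: sum_list_distinct_conv_sum_set)
  also have "\<dots> = (\<Sum>\<rho>\<in>Tr. sum c (Gr \<rho>))"
    using F_struct sum.reindex[OF inj, of "\<lambda>s. sum c (fst s)"] by simp
  also have "\<dots> \<le> (\<Sum>\<rho>\<in>Tr. 2 * sum c (path_to (node \<rho>)))"
    by (rule sum_mono) (use Gr_basic TrR in blast)
  finally show ?thesis .
qed

lemma group_bound:
  assumes rt: "rooted_subtree D X" and A: "A \<subseteq> Tr" and sat: "\<forall>\<rho>\<in>A. satisfies (X, t) \<rho>"
  shows "(\<Sum>\<rho>\<in>A. 2 * sum c (path_to (node \<rho>))) \<le> (4 - 1 / 2 ^ D) * sum c X"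
proof -
  have XD: "X \<subseteq> {1..D}" using rt by (simp add: rooted_subtree_def)
  have M0: "0 \<le> sum c X" using sum_nonneg_sub[OF XD] .
  have AR: "\<forall>\<rho>\<in>A. \<rho> \<in> R" using A TrR by blast
  have "A \<subseteq> R" using AR by blast
  then have fA: "finite A" using finR by (rule finite_subset)
  have bnd: "\<forall>\<rho>\<in>A. 0 \<le> sum c (path_to (node \<rho>)) \<and> sum c (path_to (node \<rho>)) \<le> sum c X"
  proof
    fix \<rho> assume r: "\<rho> \<in> A"
    have "path_to (node \<rho>) \<subseteq> X" using rooted_path[OF rt] sat r by (simp add: satisfies_def)
    moreover have "\<rho> \<in> R" using AR r by blast
    ultimately show "0 \<le> sum c (path_to (node \<rho>)) \<and> sum c (path_to (node \<rho>)) \<le> sum c X"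
      using Wnn sum_mono_sub[OF _ XD] by blast
  qed
  have pw: "\<forall>x\<in>A. \<forall>y\<in>A. x \<noteq> y \<longrightarrow> 2 * sum c (path_to (node x)) < sum c (path_to (node y)) \<or>
      2 * sum c (path_to (node y)) < sum c (path_to (node x))"
  proof (intro ballI impI)
    fix x y assume xy: "x \<in> A" "y \<in> A" "x \<noteq> y"
    then have "dl x \<noteq> dl y" using injdl AR by (meson inj_onD)
    then consider "dl x < dl y" | "dl y < dl x" by linarith
    then show "2 * sum c (path_to (node x)) < sum c (path_to (node y)) \<or>
      2 * sum c (path_to (node y)) < sum c (path_to (node x))"
    proof cases
      case 1
      have "satisfies (X, t) x" "satisfies (X, t) y" using sat xy by blast+
      then have "arr y \<le> dl x" by (simp add: satisfies_def)
      then show ?thesis using doubling[of x y] 1 xy A by blast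
    next
      case 2
      have "satisfies (X, t) x" "satisfies (X, t) y" using sat xy by blast+
      then have "arr x \<le> dl y" by (simp add: satisfies_def)
      then show ?thesis using doubling[of y x] 2 xy A by blast
    qed
  qed
  have cA: "card A \<le> D"
  proof -
    have "inj_on node A"
    proof
      fix x y assume xy: "x \<in> A" "y \<in> A" "node x = node y"
      show "x = y"
      proof (rule ccontr)
        assume "x \<noteq> y"
        then have "2 * sum c (path_to (node x)) < sum c (path_to (node y)) \<or>
          2 * sum c (path_to (node y)) < sum c (path_to (node x))" using pw xy by blast
        moreover have "0 \<le> sum c (path_to (node x))" using bnd xy by blast
        ultimately show False using xy by simp
      qed
    qed
    moreover have "node ` A \<subseteq> {1..D}"
    proof (rule image_subsetI)
      fix x assume "x \<in> A" then show "node x \<in> {1..D}" using AR nodeR by blast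
    qed
    ultimately have "card A \<le> card {1..D}" by (intro card_inj_on_le) auto
    then show ?thesis by simp
  qed
  have g: "(\<Sum>\<rho>\<in>A. sum c (path_to (node \<rho>))) \<le> (2 - 2 / 2 ^ card A) * sum c X"
    by (rule geo[OF fA bnd pw])
  have p: "(2::real) ^ card A \<le> 2 ^ D" using cA by (intro power_increasing) auto
  have "1 / (2::real) ^ D \<le> 1 / 2 ^ card A" using p by (intro divide_left_mono) auto
  also have "\<dots> \<le> 4 / 2 ^ card A" by (intro divide_right_mono) auto
  finally have q: "1 / (2::real) ^ D \<le> 4 / 2 ^ card A" .
  have "(\<Sum>\<rho>\<in>A. 2 * sum c (path_to (node \<rho>))) = 2 * (\<Sum>\<rho>\<in>A. sum c (path_to (node \<rho>)))"
    by (simp add: sum_distrib_left)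
  also have "\<dots> \<le> 2 * ((2 - 2 / 2 ^ card A) * sum c X)" using g by linarith
  also have "\<dots> = (4 - 4 / 2 ^ card A) * sum c X" by (simp add: algebra_simps)
  also have "\<dots> \<le> (4 - 1 / 2 ^ D) * sum c X" using q M0 by (intro mult_right_mono) auto
  finally show ?thesis .
qed

lemma cost_bound:
  assumes fs: "feasible D R sched"
  shows "sched_cost c (double c R) \<le> (4 - 1 / 2 ^ D) * sched_cost c sched"
proof -
  have "\<forall>\<rho>\<in>Tr. \<exists>i. i < length sched \<and> satisfies (sched ! i) \<rho>"
  proof
    fix \<rho> assume "\<rho> \<in> Tr"
    then have "\<rho> \<in> R" by (rule TrR)
    then obtain s where s: "s \<in> set sched" "satisfies s \<rho>" using fs unfolding feasible_def by blast
    then obtain i where "i < length sched" "sched ! i = s" by (auto simp: in_set_conv_nth)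
    then show "\<exists>i. i < length sched \<and> satisfies (sched ! i) \<rho>" using s by blast
  qed
  then have "\<exists>f. \<forall>\<rho>\<in>Tr. f \<rho> < length sched \<and> satisfies (sched ! f \<rho>) \<rho>" by (rule bchoice)
  then obtain f where f: "\<forall>\<rho>\<in>Tr. f \<rho> < length sched \<and> satisfies (sched ! f \<rho>) \<rho>"
    by blast
  have fT: "finite Tr" using finR by (simp add: Tr_def)
  have "sched_cost c (double c R) \<le> (\<Sum>\<rho>\<in>Tr. 2 * sum c (path_to (node \<rho>)))" by (rule costF)
  also have "\<dots> = (\<Sum>i\<in>{0..<length sched}. \<Sum>\<rho>\<in>{\<rho>\<in>Tr. f \<rho> = i}. 2 * sum c (path_to (node \<rho>)))"
    by (rule sum.group[symmetric]) (use fT f in auto)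
  also have "\<dots> \<le> (\<Sum>i\<in>{0..<length sched}. (4 - 1 / 2 ^ D) * sum c (fst (sched ! i)))"
  proof (rule sum_mono)
    fix i assume i: "i \<in> {0..<length sched}"
    have rt: "rooted_subtree D (fst (sched ! i))" using fs i unfolding feasible_def by auto
    have sat: "\<forall>\<rho>\<in>{\<rho>\<in>Tr. f \<rho> = i}. satisfies (fst (sched ! i), snd (sched ! i)) \<rho>" using f by auto
    show "(\<Sum>\<rho>\<in>{\<rho>\<in>Tr. f \<rho> = i}. 2 * sum c (path_to (node \<rho>))) \<le> (4 - 1 / 2 ^ D) * sum c (fst (sched ! i))"
      by (rule group_bound[OF rt _ sat]) auto
  qed
  also have "\<dots> = (4 - 1 / 2 ^ D) * sched_cost c sched"
    unfolding sched_cost_def sum_list_sum_nth by (simp add: sum_distrib_left)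
  finally show ?thesis .
qed

end

theorem mainTheorem3:
  fixes D :: nat and c :: "nat \<Rightarrow> real" and R :: "request set"
  assumes "valid_instance D c R"
  shows "feasible D R (double c R) \<and>
         (\<forall>sched. feasible D R sched \<longrightarrow>
            sched_cost c (double c R) \<le> (4 - 1 / 2 ^ D) * sched_cost c sched)"
  using feasF[OF assms] cost_bound[OF assms] by blast

end
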